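(* Consider FedProx, as described in the context, and a round $t$ whose step size satisfies $\gamma_t\le1/\alpha$. Assume that the bounded variance, bounded stochastic gradient norm and $L$-smoothness assumptions hold. Then for every client $i$ and every $k\in\{0,\dots,E\}$, $$\mathbb{E}\|\overline{\mathbf{w}}_{t,k}-\mathbf{w}^i_{t,k}\|^2\le4\gamma_t^2E^2G^2.$$
   Context: Setting: there are $C$ clients with weights $p_i\ge0$ satisfying $\sum_ip_i=1$, local objectives $F_i:\mathbb{R}^D\to\mathbb{R}$, and global objective $F=\sum_ip_iF_i$. FedProx with $\alpha>0$, $E\ge1$ local steps and step sizes $\gamma_t$, with all clients participating: in round $t$, $\mathbf{w}^i_{t,0}=\overline{\mathbf{w}}_{t,0}$ and, for $k=0,\dots,E-1$, $$\mathbf{w}^i_{t,k+1}=(1-\alpha\gamma_t)\mathbf{w}^i_{t,k}+\alpha\gamma_t\overline{\mathbf{w}}_{t,0}-\gamma_tg_i(\mathbf{w}^i_{t,k}),$$ with stochastic gradients $g_i$ of $F_i$ sampled independently given the past. Also $\overline{\mathbf{w}}_{t,k}=\sum_ip_i\mathbf{w}^i_{t,k}$ and $\overline{\mathbf{w}}_{t+1,0}=\overline{\mathbf{w}}_{t,E}$. Assumptions: - Unbiasedness: $\mathbb{E}\,g_i(\mathbf{w}^i_{t,k})=\nabla F_i(\mathbf{w}^i_{t,k})$. - Variance: $\mathbb{E}\|g_i(\mathbf{w}^i_{t,k})-\nabla F_i(\mathbf{w}^i_{t,k})\|^2\le\sigma^2$. - Bounded second moment: $\mathbb{E}\|g_i(\mathbf{w}^i_{t,k})\|^2\le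 G^2$ for all $i,t,k$. - Smoothness: each $\nabla F_i$ is $L$-Lipschitz. $\mathbb{E}$ is total expectation. *)

theory Defs
  imports "HOL-Probability.Probability"
begin

definition wavg :: "nat \<Rightarrow> (nat \<Rightarrow> real) \<Rightarrow> (nat \<Rightarrow> 'a \<Rightarrow> 'v::real_vector) \<Rightarrow> 'a \<Rightarrow> 'v" where
  "wavg C p x \<omega> = (\<Sum>j<C. p j *\<^sub>R x j \<omega>)"

end

theory Submission
  imports Defs
begin


lemma jensen_sq:
  fixes p x :: "nat \<Rightarrow> real"
  assumes "\<forall>i<C. p i \<ge> 0" "(\<Sum>i<C. p i) = 1"
  shows "(\<Sum>i<C. p i * x i)\<^sup>2 \<le> (\<Sum>i<C. p i * (x i)\<^sup>2)"
proof -
  have e1: "(\<Sum>i<C. p i * x i) = (\<Sum>i<C. sqrt (p i) * (sqrt (p i) * x i))"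
    by (rule sum.cong) (use assms in \<open>auto simp: mult.assoc[symmetric]\<close>)
  have e2: "(\<Sum>i<C. (sqrt (p i))\<^sup>2) = 1" using assms by simp
  have e3: "(\<Sum>i<C. (sqrt (p i) * x i)\<^sup>2) = (\<Sum>i<C. p i * (x i)\<^sup>2)"
    by (rule sum.cong) (use assms in \<open>auto simp: power_mult_distrib\<close>)
  show ?thesis using Cauchy_Schwarz_ineq_sum[of "\<lambda>i. sqrt (p i)" "\<lambda>i. sqrt (p i) * x i" "{..<C}"]
    unfolding e1 e2 e3 by simp
qed

lemma norm_rec:
  fixes d :: "nat \<Rightarrow> 'v::real_normed_vector" and gg :: "nat \<Rightarrow> 'v"
  assumes "d 0 = 0" "\<forall>k<E. d (Suc k) = (1 - a) *\<^sub>R d k - c *\<^sub>R gg k"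
    "0 \<le> a" "a \<le> 1" "c > 0"
  shows "k \<le> E \<Longrightarrow> norm (d k) \<le> c * (\<Sum>j<k. norm (gg j))"
proof (induction k)
  case 0 then show ?case using assms by simp
next
  case (Suc k)
  have "norm (d (Suc k)) \<le> norm ((1 - a) *\<^sub>R d k) + norm (c *\<^sub>R gg k)"
    proof -
    have "d (Suc k) = (1 - a) *\<^sub>R d k - c *\<^sub>R gg k" using assms(2) Suc.prems by simp
    then show ?thesis by (simp only: norm_triangle_ineq4)
  qed
  also have "\<dots> = (1 - a) * norm (d k) + c * norm (gg k)" using assms by simp
  also have "\<dots> \<le> norm (d k) + c * norm (gg k)" using assms by (simp add: mult_left_le_one_le)
  also have "\<dots> \<le> c * (\<Sum>j<k. norm (gg j)) + c * norm (gg k)" using Suc by simp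
  finally show ?case by (simp add: distrib_left)
qed

theorem lemma3:
  fixes M :: "'a measure"
    and C E :: nat
    and p :: "nat \<Rightarrow> real"
    and \<alpha> G \<sigma> L :: real
    and \<gamma> :: "nat \<Rightarrow> real"
    and F :: "nat \<Rightarrow> real ^ 'd \<Rightarrow> real"
    and gradF :: "nat \<Rightarrow> real ^ 'd \<Rightarrow> real ^ 'd"
    and w g :: "nat \<Rightarrow> nat \<Rightarrow> nat \<Rightarrow> 'a \<Rightarrow> real ^ 'd"
    and t :: nat
  assumes prob: "prob_space M"
    and p_nonneg: "\<forall>i<C. p i \<ge> 0"
    and p_sum: "(\<Sum>i<C. p i) = 1"
    and alpha_pos: "\<alpha> > 0"
    and E_ge: "E \<ge> 1"
    and gamma_pos: "\<forall>s. \<gamma> s > 0"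
    and w_meas: "\<forall>i<C. \<forall>s k. w i s k \<in> borel_measurable M"
    and g_meas: "\<forall>i<C. \<forall>s k. g i s k \<in> borel_measurable M"
    and init: "\<forall>i<C. \<forall>s. \<forall>\<omega>\<in>space M.
                 w i s 0 \<omega> = wavg C p (\<lambda>j. w j s 0) \<omega>"
    and step: "\<forall>i<C. \<forall>s. \<forall>k<E. \<forall>\<omega>\<in>space M.
                 w i s (Suc k) \<omega> = (1 - \<alpha> * \<gamma> s) *\<^sub>R w i s k \<omega>
                   + (\<alpha> * \<gamma> s) *\<^sub>R wavg C p (\<lambda>j. w j s 0) \<omega>
                   - \<gamma> s *\<^sub>R g i s k \<omega>"
    and round: "\<forall>s. \<forall>\<omega>\<in>space M.
                 wavg C p (\<lambda>j. w j (Suc s) 0) \<omega> = wavg C p (\<lambda>j. w j s E) \<omega>"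
    and variance: "\<forall>i<C. \<forall>s k.
                 integrable M (\<lambda>\<omega>. (norm (g i s k \<omega> - gradF i (w i s k \<omega>)))\<^sup>2) \<and>
                 (\<integral>\<omega>. (norm (g i s k \<omega> - gradF i (w i s k \<omega>)))\<^sup>2 \<partial>M) \<le> \<sigma>\<^sup>2"
    and second_moment: "\<forall>i<C. \<forall>s k.
                 integrable M (\<lambda>\<omega>. (norm (g i s k \<omega>))\<^sup>2) \<and>
                 (\<integral>\<omega>. (norm (g i s k \<omega>))\<^sup>2 \<partial>M) \<le> G\<^sup>2"
    and grad: "\<forall>i<C. \<forall>x. (F i has_derivative (\<lambda>h. gradF i x \<bullet> h)) (at x)"
    and smooth: "\<forall>i<C. \<forall>x y. norm (gradF i x - gradF i y) \<le> L * norm (x - y)"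
    and step_small: "\<gamma> t \<le> 1 / \<alpha>"
  shows "\<forall>i<C. \<forall>k\<le>E.
           (\<integral>\<omega>. (norm (wavg C p (\<lambda>j. w j t k) \<omega> - w i t k \<omega>))\<^sup>2 \<partial>M)
             \<le> 4 * (\<gamma> t)\<^sup>2 * (real E)\<^sup>2 * G\<^sup>2"
proof (intro allI impI)
  fix i k assume iC: "i < C" and kE: "k \<le> E"
  interpret P: prob_space M by (rule prob)
  define a where "a = \<alpha> * \<gamma> t"
  define c where "c = \<gamma> t"
  have c_pos: "c > 0" using gamma_pos c_def by simp
  have a0: "0 \<le> a" using alpha_pos gamma_pos a_def by (simp add: less_imp_le)
  have a1: "a \<le> 1" using step_small alpha_pos a_def by (simp add: field_simps)
  define w0 where "w0 = wavg C p (\<lambda>j. w j t 0)"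
  define S where "S l \<omega> = (\<Sum>j<k. (norm (g l t j \<omega>))\<^sup>2)" for l \<omega>
  define B where "B \<omega> = 2 * c\<^sup>2 * real k * (\<Sum>l<C. p l * S l \<omega>) + 2 * c\<^sup>2 * real k * S i \<omega>" for \<omega>
  have dbound: "(norm (w l t k \<omega> - w0 \<omega>))\<^sup>2 \<le> c\<^sup>2 * real k * S l \<omega>"
    if l: "l < C" and om: "\<omega> \<in> space M" for l \<omega>
  proof -
    have "norm (w l t k \<omega> - w0 \<omega>) \<le> c * (\<Sum>j<k. norm (g l t j \<omega>))"
    proof (rule norm_rec[where d="\<lambda>k. w l t k \<omega> - w0 \<omega>" and E=E and a=a])
      show "w l t 0 \<omega> - w0 \<omega> = 0" using init l om w0_def by simp
      show "\<forall>k<E. w l t (Suc k) \<omega> - w0 \<omega> = (1 - a) *\<^sub>R (w l t k \<omega> - w0 \<omega>) - c *\<^sub>R g l t k \<omega>"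
        using step l om unfolding w0_def a_def c_def by (simp add: algebra_simps)
    qed (use a0 a1 c_pos kE in auto)
    hence "(norm (w l t k \<omega> - w0 \<omega>))\<^sup>2 \<le> (c * (\<Sum>j<k. norm (g l t j \<omega>)))\<^sup>2"
      by (simp add: power_mono)
    also have "\<dots> = c\<^sup>2 * (\<Sum>j<k. norm (g l t j \<omega>))\<^sup>2" by (simp add: power_mult_distrib)
    also have "\<dots> \<le> c\<^sup>2 * (real k * S l \<omega>)"
      using sum_squared_le_sum_of_squares[of "\<lambda>j. norm (g l t j \<omega>)" "{..<k}"]
      by (intro mult_left_mono) (auto simp: S_def mult.commute)
    finally show ?thesis by simp
  qed
  have Snn: "S l \<omega> \<ge> 0" for l \<omega> unfolding S_def by (simp add: sum_nonneg)
  have pw: "(norm (wavg C p (\<lambda>j. w j t k) \<omega> - w i t k \<omega>))\<^sup>2 \<le> B \<omega>" if om: "\<omega> \<in> space M" for \<omega>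
  proof -
    define x where "x l = norm (w l t k \<omega> - w0 \<omega>)" for l
    have eq: "wavg C p (\<lambda>j. w j t k) \<omega> - w i t k \<omega>
       = (\<Sum>l<C. p l *\<^sub>R (w l t k \<omega> - w0 \<omega>)) - (w i t k \<omega> - w0 \<omega>)"
    proof -
      have "(\<Sum>l<C. p l *\<^sub>R (w l t k \<omega> - w0 \<omega>)) = wavg C p (\<lambda>j. w j t k) \<omega> - (\<Sum>l<C. p l) *\<^sub>R w0 \<omega>"
        by (simp add: wavg_def scaleR_diff_right sum_subtractf scaleR_sum_left)
      then show ?thesis using p_sum by simp
    qed
    have "norm (wavg C p (\<lambda>j. w j t k) \<omega> - w i t k \<omega>) \<le> (\<Sum>l<C. p l * x l) + x i"
    proof -
      have "norm (\<Sum>l<C. p l *\<^sub>R (w l t k \<omega> - w0 \<omega>)) \<le> (\<Sum>l<C. norm (p l *\<^sub>R (w l t k \<omega> - w0 \<omega>)))"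
        by (rule norm_sum)
      also have "\<dots> = (\<Sum>l<C. p l * x l)"
        by (rule sum.cong) (use p_nonneg in \<open>auto simp: x_def\<close>)
      finally have "norm ((\<Sum>l<C. p l *\<^sub>R (w l t k \<omega> - w0 \<omega>)) - (w i t k \<omega> - w0 \<omega>)) \<le> (\<Sum>l<C. p l * x l) + x i"
        using norm_triangle_ineq4[of "\<Sum>l<C. p l *\<^sub>R (w l t k \<omega> - w0 \<omega>)" "w i t k \<omega> - w0 \<omega>"]
        unfolding x_def by linarith
      then show ?thesis unfolding eq .
    qed
    hence "(norm (wavg C p (\<lambda>j. w j t k) \<omega> - w i t k \<omega>))\<^sup>2 \<le> ((\<Sum>l<C. p l * x l) + x i)\<^sup>2"
      by (simp add: power_mono)
    also have "\<dots> \<le> 2 * (\<Sum>l<C. p l * x l)\<^sup>2 + 2 * (x i)\<^sup>2"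
    proof -
      have "0 \<le> ((\<Sum>l<C. p l * x l) - x i)\<^sup>2" by simp
      then show ?thesis by (simp add: power2_eq_square algebra_simps)
    qed
    also have "\<dots> \<le> 2 * (\<Sum>l<C. p l * (x l)\<^sup>2) + 2 * (x i)\<^sup>2"
      using jensen_sq[OF p_nonneg p_sum, of x] by simp
    also have "\<dots> \<le> 2 * (\<Sum>l<C. p l * (c\<^sup>2 * real k * S l \<omega>)) + 2 * (c\<^sup>2 * real k * S i \<omega>)"
      using dbound[OF _ om] iC p_nonneg unfolding x_def
      by (intro add_mono mult_left_mono sum_mono) auto
    also have "\<dots> = B \<omega>" unfolding B_def
      by (simp add: sum_distrib_left algebra_simps)
    finally show ?thesis .
  qed
  have Sint: "integrable M (S l)" if "l < C" for l
    unfolding S_def using second_moment that by (auto intro!: Bochner_Integration.integrable_sum)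
  have Sle: "(\<integral>\<omega>. S l \<omega> \<partial>M) \<le> real k * G\<^sup>2" if "l < C" for l
  proof -
    have "(\<integral>\<omega>. S l \<omega> \<partial>M) = (\<Sum>j<k. \<integral>\<omega>. (norm (g l t j \<omega>))\<^sup>2 \<partial>M)"
      unfolding S_def using second_moment that by (subst Bochner_Integration.integral_sum) auto
    also have "\<dots> \<le> (\<Sum>j<k. G\<^sup>2)" using second_moment that by (intro sum_mono) auto
    finally show ?thesis by simp
  qed
  have Bint: "integrable M B" unfolding B_def
    using Sint iC by (auto intro!: Bochner_Integration.integrable_add integrable_mult_right Bochner_Integration.integrable_sum)
  have "(\<integral>\<omega>. (norm (wavg C p (\<lambda>j. w j t k) \<omega> - w i t k \<omega>))\<^sup>2 \<partial>M) \<le> (\<integral>\<omega>. B \<omega> \<partial>M)"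
  proof (rule integral_mono'[OF Bint pw])
    fix \<omega> assume "\<omega> \<in> space M"
    show "0 \<le> B \<omega>" unfolding B_def using p_nonneg Snn
      by (intro add_nonneg_nonneg mult_nonneg_nonneg sum_nonneg) auto
  qed
  also have "(\<integral>\<omega>. B \<omega> \<partial>M) = 2 * c\<^sup>2 * real k * (\<Sum>l<C. p l * (\<integral>\<omega>. S l \<omega> \<partial>M)) + 2 * c\<^sup>2 * real k * (\<integral>\<omega>. S i \<omega> \<partial>M)"
  proof -
    have i1: "integrable M (\<lambda>\<omega>. \<Sum>l<C. p l * S l \<omega>)" using Sint by (auto intro!: Bochner_Integration.integrable_sum integrable_mult_right)
    have "(\<integral>\<omega>. (\<Sum>l<C. p l * S l \<omega>) \<partial>M) = (\<Sum>l<C. p l * (\<integral>\<omega>. S l \<omega> \<partial>M))"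
      using Sint by (subst Bochner_Integration.integral_sum) auto
    then show ?thesis unfolding B_def using i1 Sint[OF iC] by simp
  qed
  also have "\<dots> \<le> 2 * c\<^sup>2 * real k * (\<Sum>l<C. p l * (real k * G\<^sup>2)) + 2 * c\<^sup>2 * real k * (real k * G\<^sup>2)"
    using Sle iC p_nonneg by (intro add_mono mult_left_mono sum_mono) auto
  also have "\<dots> = 4 * c\<^sup>2 * (real k)\<^sup>2 * G\<^sup>2"
  proof -
    have "(\<Sum>l<C. p l * (real k * G\<^sup>2)) = (\<Sum>l<C. p l) * (real k * G\<^sup>2)"
      by (simp add: sum_distrib_right)
    then show ?thesis using p_sum by (simp add: power2_eq_square algebra_simps)
  qed
  also have "\<dots> \<le> 4 * c\<^sup>2 * (real E)\<^sup>2 * G\<^sup>2"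
    using kE by (intro mult_right_mono mult_left_mono power_mono) auto
  finally show "(\<integral>\<omega>. (norm (wavg C p (\<lambda>j. w j t k) \<omega> - w i t k \<omega>))\<^sup>2 \<partial>M) \<le> 4 * (\<gamma> t)\<^sup>2 * (real E)\<^sup>2 * G\<^sup>2"
    unfolding c_def .
qed

end
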